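(* In the setting of the two-instance Bernoulli lower bound (instances $\mathcal P_1$: arms $\mathrm{Ber}(p_0),\mathrm{Ber}(p_0-\epsilon)$; $\mathcal P_2$: swapped; approx-oracle allocation $\tilde T_i^*=n\,\mathfrak c(q_i)^{1/\alpha}/(\mathfrak c(q_1)^{1/\alpha}+\mathfrak c(q_2)^{1/\alpha})$ with $q_i$ the parameter of arm $i$), take $p_0=3/4$ and $\epsilon=1/(4\sqrt n)$, and let $(\mathfrak c,\alpha)$ be any one of the following: (i) $\mathfrak c(p)=1-p^2-(1-p)^2$, $\alpha=1$ ($\ell_2^2$-distance); (ii) $\mathfrak c(p)=2\sqrt{p(1-p)}$, $\alpha=1/2$ ($\ell_1$-distance); (iii) $\mathfrak c(p)=\sqrt{1/p-1}+\sqrt{1/(1-p)-1}$, $\alpha=1/2$ (separation distance). Then there is an absolute constant $C>0$ such that for all $n\ge2$ and every adaptive allocation scheme with budget $n$, $$\max_{\mathcal P\in\{\mathcal P_1,\mathcal P_2\}}\ \max_{i\in\{1,2\}}\ \mathbb E_{\mathcal P}\big[|T_i-\tilde T_i^*|\big]\;\ge\;C\sqrt n .$$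
   Context: An adaptive allocation scheme with budget $n$ selects at each round $t=1,\dots,n$ one of two arms based on the past selections and observations; the selected arm yields an independent Bernoulli draw with its parameter. $T_i$ is the total number of pulls of arm $i$ ($T_1+T_2=n$), and $\mathbb E_{\mathcal P}$ is expectation under instance $\mathcal P$. *)

theory Defs
  imports "HOL-Probability.Probability"
begin

text \<open>Arms are encoded as booleans: True = arm 1, False = arm 2.
  A history is the list of (selected arm, observed Bernoulli outcome) pairs.
  An adaptive allocation scheme (possibly randomized) is a map from the past
  history to the probability of selecting arm 1 in the next round
  (values outside [0,1] are clamped by bernoulli_pmf).\<close>

type_synonym history = "(bool \<times> bool) list"
type_synonym policy = "history \<Rightarrow> real"

primrec hist :: "policy \<Rightarrow> (bool \<Rightarrow> real) \<Rightarrow> nat \<Rightarrow> history pmf" where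
  "hist \<pi> q 0 = return_pmf []"
| "hist \<pi> q (Suc t) =
     bind_pmf (hist \<pi> q t) (\<lambda>h.
     bind_pmf (bernoulli_pmf (\<pi> h)) (\<lambda>a.
     bind_pmf (bernoulli_pmf (q a)) (\<lambda>y.
     return_pmf (h @ [(a, y)]))))"

definition pulls :: "bool \<Rightarrow> history \<Rightarrow> nat" where
  "pulls i h = length (filter (\<lambda>(a, _). a = i) h)"

definition oracle_alloc :: "(real \<Rightarrow> real) \<Rightarrow> real \<Rightarrow> nat \<Rightarrow> (bool \<Rightarrow> real) \<Rightarrow> bool \<Rightarrow> real" where
  "oracle_alloc c \<alpha> n q i =
     real n * c (q i) powr (1 / \<alpha>) /
     (c (q True) powr (1 / \<alpha>) + c (q False) powr (1 / \<alpha>))"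

definition alloc_err :: "(real \<Rightarrow> real) \<Rightarrow> real \<Rightarrow> nat \<Rightarrow> policy \<Rightarrow> (bool \<Rightarrow> real) \<Rightarrow> bool \<Rightarrow> real" where
  "alloc_err c \<alpha> n \<pi> q i =
     measure_pmf.expectation (hist \<pi> q n)
       (\<lambda>h. \<bar>real (pulls i h) - oracle_alloc c \<alpha> n q i\<bar>)"

definition inst1 :: "nat \<Rightarrow> bool \<Rightarrow> real" where
  "inst1 n = (\<lambda>i. if i then 3/4 else 3/4 - 1 / (4 * sqrt (real n)))"

definition inst2 :: "nat \<Rightarrow> bool \<Rightarrow> real" where
  "inst2 n = (\<lambda>i. if i then 3/4 - 1 / (4 * sqrt (real n)) else 3/4)"

end

theory Submission
  imports Defs "HOL-Probability.Probability"
begin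


abbreviation H :: "nat \<Rightarrow> history set" where "H t \<equiv> {h. length h = t}"

lemma finite_H: "finite (H t)"
  using finite_lists_length_eq[of "UNIV :: (bool\<times>bool) set" t] by simp

lemma set_hist: "set_pmf (hist \<pi> q t) \<subseteq> H t"
  by (induction t) (auto simp: set_bind_pmf)

lemma H_Suc: "H (Suc t) = (\<lambda>(h,p). h @ [p]) ` (H t \<times> UNIV)"
proof
  show "H (Suc t) \<subseteq> (\<lambda>(h,p). h @ [p]) ` (H t \<times> UNIV)"
  proof
    fix h assume "h \<in> H (Suc t)"
    then have "h = butlast h @ [last h]" "butlast h \<in> H t"
      by (auto intro!: append_butlast_last_id[symmetric])
    then show "h \<in> (\<lambda>(h,p). h @ [p]) ` (H t \<times> UNIV)" by force
  qed
qed auto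

lemma inj_snoc: "inj_on (\<lambda>(h::history,p). h @ [p]) X"
  by (auto simp: inj_on_def)

lemma pmf_hist_Suc:
  "pmf (hist \<pi> q (Suc t)) (h @ [(a,y)]) =
     pmf (hist \<pi> q t) h * pmf (bernoulli_pmf (\<pi> h)) a * pmf (bernoulli_pmf (q a)) y"
proof -
  have inner: "pmf (bind_pmf (bernoulli_pmf (\<pi> h')) (\<lambda>a.
     bind_pmf (bernoulli_pmf (q a)) (\<lambda>y. return_pmf (h' @ [(a, y)])))) (h @ [(a,y)])
     = (if h' = h then pmf (bernoulli_pmf (\<pi> h)) a * pmf (bernoulli_pmf (q a)) y else 0)" for h'
    apply (simp add: pmf_bind)
    apply (subst integral_measure_pmf[where A=UNIV], simp, simp)
    apply (subst integral_measure_pmf[where A=UNIV], simp, simp)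
    apply (cases a; cases y; auto simp: UNIV_bool indicator_def)
    done
  show ?thesis
  proof (cases "length h = t")
    case True
    then show ?thesis
    apply (simp only: hist.simps)
    apply (subst pmf_bind)
    apply (simp only: inner)
    apply (subst integral_measure_pmf[where A="H t"])
      apply (rule finite_H)
    using set_hist apply fastforce
    apply (simp add: finite_H if_distrib sum.delta cong: if_cong)
    done
  next
    case False
    have "pmf (hist \<pi> q t) h = 0" using set_hist[of \<pi> q t] False by (auto simp: set_pmf_iff)
    moreover have "h@[(a,y)] \<notin> set_pmf (hist \<pi> q (Suc t))"
      using set_hist[of \<pi> q "Suc t"] False by fastforce
    hence "pmf (hist \<pi> q (Suc t)) (h@[(a,y)]) = 0" by (metis set_pmf_iff)
    ultimately show ?thesis by simp
  qed
qed

declare hist.simps(2)[simp del]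

lemma sum_UNIV_bb: "(\<Sum>p\<in>(UNIV::(bool\<times>bool) set). g p) = g (True,True) + g (True,False) + g (False,True) + g (False,False)"
  by (simp add: UNIV_Times_UNIV[symmetric] UNIV_bool sum.cartesian_product[symmetric] add_ac del: UNIV_Times_UNIV)

lemma sqrt_pmf_sq: "sqrt (pmf M x * pmf M x) = pmf M x"
  by (simp add: pmf_nonneg)

lemma BC:
  assumes "\<And>a. (\<Sum>y\<in>UNIV. sqrt (pmf (bernoulli_pmf (q1 a)) y * pmf (bernoulli_pmf (q2 a)) y)) = \<beta>"
  shows "(\<Sum>h\<in>H t. sqrt (pmf (hist \<pi> q1 t) h * pmf (hist \<pi> q2 t) h)) = \<beta> ^ t"
proof (induction t)
  case 0
  then show ?case by simp
next
  case (Suc t)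
  let ?F = "\<lambda>t h. sqrt (pmf (hist \<pi> q1 t) h * pmf (hist \<pi> q2 t) h)"
  have step: "(\<Sum>p\<in>UNIV. ?F (Suc t) (h @ [p])) = ?F t h * \<beta>" for h
  proof -
    have e: "?F (Suc t) (h @ [(a,y)]) = ?F t h * pmf (bernoulli_pmf (\<pi> h)) a *
        sqrt (pmf (bernoulli_pmf (q1 a)) y * pmf (bernoulli_pmf (q2 a)) y)" for a y
    proof -
      have "?F (Suc t) (h @ [(a,y)]) = sqrt ((pmf (hist \<pi> q1 t) h * pmf (hist \<pi> q2 t) h) *
         (pmf (bernoulli_pmf (\<pi> h)) a * pmf (bernoulli_pmf (\<pi> h)) a) *
         (pmf (bernoulli_pmf (q1 a)) y * pmf (bernoulli_pmf (q2 a)) y))"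
        by (simp del: hist.simps add: pmf_hist_Suc mult_ac)
      also have "\<dots> = ?F t h * pmf (bernoulli_pmf (\<pi> h)) a *
        sqrt (pmf (bernoulli_pmf (q1 a)) y * pmf (bernoulli_pmf (q2 a)) y)"
        by (simp add: real_sqrt_mult pmf_nonneg)
      finally show ?thesis .
    qed
    let ?s = "\<lambda>a. (\<Sum>y\<in>UNIV. sqrt (pmf (bernoulli_pmf (q1 a)) y * pmf (bernoulli_pmf (q2 a)) y))"
    have "(\<Sum>p\<in>UNIV. ?F (Suc t) (h @ [p])) = ?F t h * (pmf (bernoulli_pmf (\<pi> h)) True * ?s True + pmf (bernoulli_pmf (\<pi> h)) False * ?s False)"
      by (simp add: sum_UNIV_bb e UNIV_bool algebra_simps)
    also have "\<dots> = ?F t h * (pmf (bernoulli_pmf (\<pi> h)) True * \<beta> + pmf (bernoulli_pmf (\<pi> h)) False * \<beta>)"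
      by (simp only: assms)
    also have "pmf (bernoulli_pmf (\<pi> h)) True + pmf (bernoulli_pmf (\<pi> h)) False = 1"
      using sum_pmf_eq_1[of UNIV "bernoulli_pmf (\<pi> h)"] by (simp add: UNIV_bool add.commute, blast)
    hence "pmf (bernoulli_pmf (\<pi> h)) True * \<beta> + pmf (bernoulli_pmf (\<pi> h)) False * \<beta> = \<beta>"
      by (metis distrib_right mult_1)
    finally show ?thesis by simp
  qed
  have "(\<Sum>h\<in>H (Suc t). ?F (Suc t) h) = (\<Sum>hp\<in>H t \<times> UNIV. ?F (Suc t) ((\<lambda>(h,p). h @ [p]) hp))"
    by (simp only: H_Suc sum.reindex[OF inj_snoc] comp_def)
  also have "\<dots> = (\<Sum>h\<in>H t. \<Sum>p\<in>UNIV. ?F (Suc t) (h @ [p]))"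
    by (simp only: sum.cartesian_product) (auto intro!: sum.cong split: prod.splits)
  also have "\<dots> = (\<Sum>h\<in>H t. ?F t h) * \<beta>"
    by (simp add: step sum_distrib_right)
  finally show ?case using Suc.IH by simp
qed



lemma amgm_s:
  fixes x y s :: real assumes "x \<ge> 0" "y \<ge> 0" "s > 0"
  shows "sqrt (x * y) \<le> (s * x + y / s) / 2"
proof -
  have "sqrt (x*y) = sqrt (s*x) * sqrt (y/s)" using assms
    by (simp add: real_sqrt_mult[symmetric])
  also have "\<dots> \<le> ((sqrt (s*x))^2 + (sqrt (y/s))^2) / 2"
    using sum_squares_bound[of "sqrt (s*x)" "sqrt (y/s)"] by (simp add: mult.assoc)
  also have "\<dots> = (s * x + y / s) / 2" using assms by simp
  finally show ?thesis .
qed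

lemma le_cam:
  fixes P Q :: "'a \<Rightarrow> real"
  assumes A: "finite A" and nn: "\<And>x. P x \<ge> 0" "\<And>x. Q x \<ge> 0"
    and sP: "(\<Sum>x\<in>A. P x) = 1" and sQ: "(\<Sum>x\<in>A. Q x) = 1"
  shows "(\<Sum>x\<in>A. sqrt (P x * Q x))^2 / 2 \<le> (\<Sum>x\<in>A. min (P x) (Q x))"
proof -
  define B where "B = (\<Sum>x\<in>A. sqrt (P x * Q x))"
  define m where "m = (\<Sum>x\<in>A. min (P x) (Q x))"
  have m0: "m \<ge> 0" unfolding m_def using nn by (intro sum_nonneg) auto
  have B0: "B \<ge> 0" unfolding B_def using nn by (intro sum_nonneg) simp
  show ?thesis
  proof (cases "B = 0")
    case True then show ?thesis using m0 by (simp add: B_def[symmetric] m_def[symmetric])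
  next
    case False
    with B0 have Bp: "B > 0" by simp
    define s where "s = 2 / B"
    have sp: "s > 0" using Bp by (simp add: s_def)
    have "B \<le> (\<Sum>x\<in>A. (s * min (P x) (Q x) + max (P x) (Q x) / s) / 2)"
      unfolding B_def
    proof (rule sum_mono)
      fix x assume "x \<in> A"
      have "P x * Q x = min (P x) (Q x) * max (P x) (Q x)" by (simp add: min_def max_def mult.commute)
      then show "sqrt (P x * Q x) \<le> (s * min (P x) (Q x) + max (P x) (Q x) / s) / 2"
        using amgm_s[of "min (P x) (Q x)" "max (P x) (Q x)" s] nn[of x] sp by simp
    qed
    also have "\<dots> = (s * m + (\<Sum>x\<in>A. max (P x) (Q x)) / s) / 2"
      by (simp add: m_def sum_divide_distrib[symmetric] sum.distrib sum_distrib_left)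
    also have "(\<Sum>x\<in>A. max (P x) (Q x)) \<le> (\<Sum>x\<in>A. P x + Q x)"
      using nn by (intro sum_mono) auto
    also have "(\<Sum>x\<in>A. P x + Q x) = 2" using sP sQ by (simp add: sum.distrib)
    finally have "B \<le> (s * m + 2 / s) / 2" using sp by (simp add: divide_right_mono add_left_mono)
    hence "B \<le> (2 * m / B + B) / 2" by (simp add: s_def)
    hence "B * B \<le> (2 * m / B + B) / 2 * B" using Bp by (simp add: mult_right_mono)
    hence "B * B \<le> m + B * B / 2" using Bp by (simp add: field_simps)
    hence "B^2/2 \<le> m" by (simp add: power2_eq_square)
    thus ?thesis unfolding B_def m_def .
  qed
qed

lemma expect_sum:
  "measure_pmf.expectation (hist \<pi> q n) f = (\<Sum>h\<in>H n. pmf (hist \<pi> q n) h * f h)"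
  apply (subst integral_measure_pmf_real[where A="H n"])
    apply (rule finite_H)
  using set_hist apply blast
  apply (simp add: mult.commute)
  done

lemma lower:
  fixes T :: "history \<Rightarrow> real"
  assumes "\<And>a. (\<Sum>y\<in>UNIV. sqrt (pmf (bernoulli_pmf (q1 a)) y * pmf (bernoulli_pmf (q2 a)) y)) = \<beta>"
  shows "measure_pmf.expectation (hist \<pi> q1 n) (\<lambda>h. \<bar>T h - a1\<bar>) + measure_pmf.expectation (hist \<pi> q2 n) (\<lambda>h. \<bar>T h - a2\<bar>)
     \<ge> \<bar>a1 - a2\<bar> * (\<beta>^n)^2 / 2"
proof -
  let ?P = "pmf (hist \<pi> q1 n)" and ?Q = "pmf (hist \<pi> q2 n)"
  have bc: "(\<Sum>h\<in>H n. sqrt (?P h * ?Q h)) = \<beta>^n" by (rule BC) (rule assms)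
  have lc: "(\<beta>^n)^2 / 2 \<le> (\<Sum>h\<in>H n. min (?P h) (?Q h))"
    using le_cam[where A="H n" and P="pmf (hist \<pi> q1 n)" and Q="pmf (hist \<pi> q2 n)", OF finite_H] bc
      sum_pmf_eq_1[OF finite_H set_hist[of \<pi> q1 n]] sum_pmf_eq_1[OF finite_H set_hist[of \<pi> q2 n]]
    by (simp add: pmf_nonneg)
  have "\<bar>a1 - a2\<bar> * (\<beta>^n)^2 / 2 \<le> \<bar>a1 - a2\<bar> * (\<Sum>h\<in>H n. min (?P h) (?Q h))"
    using mult_left_mono[OF lc, of "\<bar>a1 - a2\<bar>"] by simp
  also have "\<dots> = (\<Sum>h\<in>H n. min (?P h) (?Q h) * \<bar>a1 - a2\<bar>)"
    by (simp add: sum_distrib_left mult.commute)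
  also have "\<dots> \<le> (\<Sum>h\<in>H n. ?P h * \<bar>T h - a1\<bar> + ?Q h * \<bar>T h - a2\<bar>)"
  proof (rule sum_mono)
    fix h
    have "min (?P h) (?Q h) * \<bar>a1 - a2\<bar> \<le> min (?P h) (?Q h) * (\<bar>T h - a1\<bar> + \<bar>T h - a2\<bar>)"
      by (intro mult_left_mono) (simp add: abs_triangle_ineq4 abs_minus_commute[of "T h" a1]
           abs_triangle_ineq[of "a1 - T h" "T h - a2", simplified], simp add: pmf_nonneg)
    also have "\<dots> \<le> ?P h * \<bar>T h - a1\<bar> + ?Q h * \<bar>T h - a2\<bar>"
    proof -
      have "min (?P h) (?Q h) * \<bar>T h - a1\<bar> \<le> ?P h * \<bar>T h - a1\<bar>" by (rule mult_right_mono) auto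
      moreover have "min (?P h) (?Q h) * \<bar>T h - a2\<bar> \<le> ?Q h * \<bar>T h - a2\<bar>" by (rule mult_right_mono) auto
      ultimately show ?thesis by (simp only: distrib_left)
    qed
    finally show "min (?P h) (?Q h) * \<bar>a1 - a2\<bar> \<le> ?P h * \<bar>T h - a1\<bar> + ?Q h * \<bar>T h - a2\<bar>" .
  qed
  also have "\<dots> = measure_pmf.expectation (hist \<pi> q1 n) (\<lambda>h. \<bar>T h - a1\<bar>) + measure_pmf.expectation (hist \<pi> q2 n) (\<lambda>h. \<bar>T h - a2\<bar>)"
    by (simp add: expect_sum sum.distrib)
  finally show ?thesis .
qed



lemma sqrt_ge_hm:
  fixes x y :: real assumes "x > 0" "y > 0"
  shows "2*x*y/(x+y) \<le> sqrt (x*y)"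
proof (rule real_le_rsqrt)
  have "(2*x*y/(x+y))^2 = 4*x*y*(x*y)/(x+y)^2" by (simp add: power2_eq_square field_simps)
  also have "\<dots> \<le> x*y"
  proof -
    have "4*x*y \<le> (x+y)^2" using sum_squares_bound[of x y] by (simp add: power2_sum)
    hence "4*x*y*(x*y) \<le> (x+y)^2 * (x*y)" using assms by (intro mult_right_mono) auto
    thus ?thesis using assms by (simp add: divide_le_eq)
  qed
  finally show "(2*x*y/(x+y))^2 \<le> x*y" .
qed

lemma beta_bound:
  fixes e :: real assumes e: "0 < e" "e \<le> 1/4"
  shows "1 - 2*e^2 \<le> sqrt (3/4*(3/4-e)) + sqrt ((1-3/4)*(1-(3/4-e)))"
proof -
  have h1: "2*(3/4)*(3/4-e)/(3/4+(3/4-e)) \<le> sqrt (3/4*(3/4-e))"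
    using sqrt_ge_hm[of "3/4" "3/4-e"] e by simp
  have h2: "2*(1/4)*(1/4+e)/(1/4+(1/4+e)) \<le> sqrt ((1-3/4)*(1-(3/4-e)))"
    using sqrt_ge_hm[of "1/4" "1/4+e"] e by simp
  have i1: "2*(3/4)*(3/4-e)/(3/4+(3/4-e)) = (3/4 - e/2) - e^2/(3 - 2*e)"
    using e by (simp add: field_simps power2_eq_square)
  have i2: "2*(1/4)*(1/4+e)/(1/4+(1/4+e)) = (1/4 + e/2) - e^2/(1 + 2*e)"
    using e by (simp add: field_simps power2_eq_square)
  have j1: "e^2/(3 - 2*e) \<le> e^2" using e by (simp add: divide_le_eq)
  have j2: "e^2/(1 + 2*e) \<le> e^2" using e by (simp add: divide_le_eq)
  show ?thesis using h1 h2 i1 i2 j1 j2 by linarith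
qed

lemma delta_gen:
  fixes A B k :: real and n :: nat
  assumes "A > 0" "B > 0" "\<bar>A - B\<bar> \<ge> k*(A+B)"
  shows "\<bar>real n * A/(A+B) - real n * B/(B+A)\<bar> \<ge> real n * k"
proof -
  have "real n * A/(A+B) - real n * B/(B+A) = (real n * A - real n * B)/(A+B)"
    by (metis add.commute diff_divide_distrib)
  also have "\<dots> = real n * ((A - B)/(A+B))" by (simp add: right_diff_distrib)
  finally have "real n * A/(A+B) - real n * B/(B+A) = real n * ((A - B)/(A+B))" .
  moreover have "\<bar>(A - B)/(A+B)\<bar> \<ge> k"
  proof -
    have "\<bar>(A - B)/(A+B)\<bar> = \<bar>A - B\<bar>/(A+B)" using assms by (simp add: abs_divide)
    moreover have "k \<le> \<bar>A - B\<bar>/(A+B)" using assms by (subst pos_le_divide_eq) (auto simp: algebra_simps)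
    ultimately show ?thesis by (simp only:)
  qed
  ultimately show ?thesis using mult_left_mono[of k "\<bar>(A - B)/(A+B)\<bar>" "real n"] by (simp add: abs_mult)
qed

lemma esq: fixes e :: real assumes "0 < e" "e \<le> 1/4" shows "e^2 \<le> e/4"
  using mult_left_mono[of e "1/4" e] assms by (simp add: power2_eq_square)

lemma case_poly:
  fixes e K :: real assumes e: "0 < e" "e \<le> 1/4" and K: "K > 0"
  shows "\<bar>K*(3/4)*(1-3/4) - K*(3/4-e)*(1-(3/4-e))\<bar> \<ge> e/4 * (K*(3/4)*(1-3/4) + K*(3/4-e)*(1-(3/4-e)))"
proof -
  have "K*(3/4)*(1-3/4) - K*(3/4-e)*(1-(3/4-e)) = - K*(e/2 - e^2)" by (simp add: algebra_simps power2_eq_square)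
  moreover have "K*(3/4)*(1-3/4) + K*(3/4-e)*(1-(3/4-e)) = K*(3/8 + e/2 - e^2)" by (simp add: field_simps power2_eq_square)
  moreover have "e/4 * (K*(3/8 + e/2 - e^2)) \<le> K*(e/2 - e^2)"
  proof -
    have "e/4 * (3/8 + e/2 - e^2) = 3*e/32 + e^2/8 - e^3/4" by (simp add: algebra_simps power2_eq_square power3_eq_cube)
    moreover have "e^3 \<ge> 0" using e by simp
    ultimately have "e/4 * (3/8 + e/2 - e^2) \<le> e/2 - e^2" using esq[OF e] e by linarith
    hence "K * (e/4 * (3/8 + e/2 - e^2)) \<le> K * (e/2 - e^2)" using K by (intro mult_left_mono) auto
    thus ?thesis by (simp add: mult_ac)
  qed
  moreover have "e/2 - e^2 \<ge> 0" using esq[OF e] e by linarith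
  ultimately show ?thesis using K by (simp add: abs_mult)
qed

lemma case_inv:
  fixes e :: real assumes e: "0 < e" "e \<le> 1/4"
  shows "\<bar>1/((3/4)*(1-3/4)) - 1/((3/4-e)*(1-(3/4-e)))\<bar> \<ge> e/4 * (1/((3/4)*(1-3/4)) + 1/((3/4-e)*(1-(3/4-e))))"
proof -
  define D where "D = (3/4-e)*(1-(3/4-e))"
  define d where "d = e/2 - e^2"
  have Dd: "D = 3/16 + d" by (simp add: D_def d_def algebra_simps power2_eq_square)
  have d1: "d \<ge> e/4" using esq[OF e] by (simp add: d_def)
  have d2: "d \<le> e/2" using e by (simp add: d_def)
  have Dp: "D > 0" using Dd d1 e by linarith
  have eq1: "1/((3/4)*(1-3/4)) - 1/D = (16*d/3) / D" using Dp Dd by (simp add: field_simps)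
  have eq2: "1/((3/4)*(1-3/4)) + 1/D = (2 + 16*d/3) / D" using Dp Dd by (simp add: field_simps)
  have k: "e/4 * (2 + 16*d/3) \<le> 16*d/3"
  proof -
    have "e*d \<le> (1/4)*d" using e d1 by (intro mult_right_mono) auto
    moreover have "e/4 * (2 + 16*d/3) = e/2 + 4*(e*d)/3" by (simp add: algebra_simps)
    ultimately show ?thesis using d1 e by linarith
  qed
  have "e/4 * ((2 + 16*d/3) / D) = (e/4 * (2 + 16*d/3)) / D" by simp
  also have "\<dots> \<le> (16*d/3) / D" using k Dp by (intro divide_right_mono) auto
  also have "\<dots> = \<bar>(16*d/3) / D\<bar>" using Dp d1 e by simp
  finally have "e/4 * ((2 + 16*d/3) / D) \<le> \<bar>(16*d/3) / D\<bar>" .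
  then show ?thesis unfolding D_def[symmetric] eq1 eq2 .
qed



lemma g1: fixes p :: real assumes "0 < p" "p < 1" shows "(1 - p\<^sup>2 - (1 - p)\<^sup>2) powr (1/1) = 2*p*(1-p)"
proof -
  have "1 - p\<^sup>2 - (1 - p)\<^sup>2 = 2*p*(1-p)" by (simp add: power2_eq_square algebra_simps)
  moreover have "2*p*(1-p) \<ge> 0" using assms by simp
  ultimately show ?thesis by simp
qed

lemma g2: fixes p :: real assumes "0 < p" "p < 1" shows "(2 * sqrt (p * (1 - p))) powr (1/(1/2)) = 4*p*(1-p)"
proof -
  have "p*(1-p) \<ge> 0" using assms by simp
  then show ?thesis by (simp add: power_mult_distrib)
qed

lemma g3: fixes p :: real assumes "0 < p" "p < 1"
  shows "(sqrt (1/p - 1) + sqrt (1/(1 - p) - 1)) powr (1/(1/2)) = 1/(p*(1-p))"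
proof -
  have a: "1/p - 1 \<ge> 0" "1/(1-p) - 1 \<ge> 0" using assms by (simp_all add: field_simps)
  have ab: "(1/p - 1) * (1/(1-p) - 1) = 1" using assms by (simp add: field_simps)
  have "(sqrt (1/p - 1) + sqrt (1/(1 - p) - 1))^2 = (1/p - 1) + (1/(1-p) - 1) + 2 * sqrt ((1/p - 1) * (1/(1-p) - 1))"
    using a by (simp add: power2_sum real_sqrt_mult)
  also have "\<dots> = 1/(p*(1-p))" using assms by (simp add: ab field_simps)
  finally show ?thesis using a by simp
qed

lemma g_key:
  assumes "(c, \<alpha>) \<in> {((\<lambda>p. 1 - p\<^sup>2 - (1 - p)\<^sup>2), 1),
                      ((\<lambda>p. 2 * sqrt (p * (1 - p))), 1/2),
                      ((\<lambda>p. sqrt (1/p - 1) + sqrt (1/(1 - p) - 1)), 1/2)}"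
    and e: "0 < e" "e \<le> 1/4"
  shows "c (3/4) powr (1/\<alpha>) > 0 \<and> c (3/4 - e) powr (1/\<alpha>) > 0 \<and>
    \<bar>c (3/4) powr (1/\<alpha>) - c (3/4 - e) powr (1/\<alpha>)\<bar> \<ge> e/4 * (c (3/4) powr (1/\<alpha>) + c (3/4 - e) powr (1/\<alpha>))"
proof -
  have p1: "0 < (3/4::real)" "(3/4::real) < 1" by simp_all
  have p2: "0 < 3/4 - e" "3/4 - e < 1" using e by simp_all
  have pos: "0 < (3/4-e) * (1 - (3/4 - e))" using p2 by simp
  from assms(1) consider "c = (\<lambda>p. 1 - p\<^sup>2 - (1 - p)\<^sup>2)" "\<alpha> = 1"
    | "c = (\<lambda>p. 2 * sqrt (p * (1 - p)))" "\<alpha> = 1/2"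
    | "c = (\<lambda>p. sqrt (1/p - 1) + sqrt (1/(1 - p) - 1))" "\<alpha> = 1/2" by auto
  then show ?thesis
  proof cases
    case 1
    have A: "c (3/4) powr (1/\<alpha>) = 2*(3/4)*(1-3/4)" unfolding 1 by (rule g1[OF p1])
    have B: "c (3/4-e) powr (1/\<alpha>) = 2*(3/4-e)*(1-(3/4-e))" unfolding 1 by (rule g1[OF p2])
    have "0 < 2*(3/4-e)*(1-(3/4-e))" using p2 by (intro mult_pos_pos) auto
    then show ?thesis unfolding A B using case_poly[OF e, of 2] by simp
  next
    case 2
    have A: "c (3/4) powr (1/\<alpha>) = 4*(3/4)*(1-3/4)" unfolding 2 by (rule g2[OF p1])
    have B: "c (3/4-e) powr (1/\<alpha>) = 4*(3/4-e)*(1-(3/4-e))" unfolding 2 by (rule g2[OF p2])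
    have "0 < 4*(3/4-e)*(1-(3/4-e))" using p2 by (intro mult_pos_pos) auto
    then show ?thesis unfolding A B using case_poly[OF e, of 4] by simp
  next
    case 3
    have A: "c (3/4) powr (1/\<alpha>) = 1/((3/4)*(1-3/4))" unfolding 3 by (rule g3[OF p1])
    have B: "c (3/4-e) powr (1/\<alpha>) = 1/((3/4-e)*(1-(3/4-e)))" unfolding 3 by (rule g3[OF p2])
    have "0 < 1/((3/4-e)*(1-(3/4-e)))" using pos by simp
    then show ?thesis unfolding A B using case_inv[OF e] by simp
  qed
qed



theorem mainTheorem8:
  fixes c :: "real \<Rightarrow> real" and \<alpha> :: real
  assumes "(c, \<alpha>) \<in> {((\<lambda>p. 1 - p\<^sup>2 - (1 - p)\<^sup>2), 1),
                      ((\<lambda>p. 2 * sqrt (p * (1 - p))), 1/2),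
                      ((\<lambda>p. sqrt (1/p - 1) + sqrt (1/(1 - p) - 1)), 1/2)}"
  shows "\<exists>C>0. \<forall>n\<ge>2. \<forall>\<pi> :: policy.
           max (max (alloc_err c \<alpha> n \<pi> (inst1 n) True) (alloc_err c \<alpha> n \<pi> (inst1 n) False))
               (max (alloc_err c \<alpha> n \<pi> (inst2 n) True) (alloc_err c \<alpha> n \<pi> (inst2 n) False))
           \<ge> C * sqrt (real n)"
proof (intro exI[of _ "1/100"] conjI allI impI)
  show "(0::real) < 1/100" by simp
  fix n :: nat and \<pi> :: policy assume n: "2 \<le> n"
  define e where "e = 1 / (4 * sqrt (real n))"
  have sn: "sqrt (real n) \<ge> 1" using n by simp
  have e0: "0 < e" using sn by (simp add: e_def)
  have e1: "e \<le> 1/4" using sn by (simp add: e_def field_simps)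
  have nn: "real n > 0" using n by simp
  have esq2: "e^2 = 1/(16*real n)" using nn by (simp add: e_def power_divide power_mult_distrib)
  have ne: "real n * e = sqrt (real n)/4"
  proof -
    have "real n = sqrt (real n) * sqrt (real n)" using nn by simp
    then show ?thesis using sn unfolding e_def by (metis (no_types, lifting) divide_divide_eq_left' nonzero_mult_div_cancel_left
      not_one_le_zero times_divide_eq_right mult_1_right)
  qed
  have i1: "inst1 n = (\<lambda>i. if i then 3/4 else 3/4 - e)" unfolding inst1_def e_def by (rule refl)
  have i2: "inst2 n = (\<lambda>i. if i then 3/4 - e else 3/4)" unfolding inst2_def e_def by (rule refl)
  define A where "A = c (3/4) powr (1/\<alpha>)"
  define B where "B = c (3/4 - e) powr (1/\<alpha>)"
  have gk: "A > 0" "B > 0" "\<bar>A - B\<bar> \<ge> e/4 * (A+B)"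
    using g_key[OF assms e0 e1] unfolding A_def B_def by auto
  define a1 where "a1 = oracle_alloc c \<alpha> n (inst1 n) True"
  define a2 where "a2 = oracle_alloc c \<alpha> n (inst2 n) True"
  have a1: "a1 = real n * A/(A+B)" by (simp add: a1_def oracle_alloc_def i1 A_def B_def)
  have a2: "a2 = real n * B/(B+A)" by (simp add: a2_def oracle_alloc_def i2 A_def B_def)
  have d: "\<bar>a1 - a2\<bar> \<ge> real n * (e/4)" unfolding a1 a2 by (rule delta_gen[OF gk])
  have d2: "\<bar>a1 - a2\<bar> \<ge> sqrt (real n) / 16" using d ne by simp
  define \<beta> where "\<beta> = sqrt (3/4*(3/4-e)) + sqrt ((1-3/4)*(1-(3/4-e)))"
  have bc: "(\<Sum>y\<in>UNIV. sqrt (pmf (bernoulli_pmf (inst1 n a)) y * pmf (bernoulli_pmf (inst2 n a)) y)) = \<beta>" for a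
    using e0 e1 by (cases a) (simp_all add: i1 i2 UNIV_bool \<beta>_def mult.commute add.commute)
  have low: "alloc_err c \<alpha> n \<pi> (inst1 n) True + alloc_err c \<alpha> n \<pi> (inst2 n) True
      \<ge> \<bar>a1 - a2\<bar> * (\<beta>^n)^2 / 2"
    unfolding alloc_err_def a1_def a2_def by (rule lower[OF bc])
  have bb: "1 - 2*e^2 \<le> \<beta>" unfolding \<beta>_def by (rule beta_bound[OF e0 e1])
  have b0: "0 \<le> 1 - 2*e^2" using esq[OF e0 e1] e1 e0 by linarith
  have "(\<beta>^n)^2 = \<beta>^(2*n)" by (simp add: power_mult[symmetric] mult.commute)
  also have "\<dots> \<ge> (1 - 2*e^2)^(2*n)" by (rule power_mono[OF bb b0])
  finally have "(\<beta>^n)^2 \<ge> (1 + (- 2*e^2))^(2*n)" by simp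
  moreover have "(1 + (- 2*e^2))^(2*n) \<ge> 1 + real (2*n) * (- 2*e^2)"
    by (rule Bernoulli_inequality) (use b0 in simp)
  moreover have "1 + real (2*n) * (- 2*e^2) = 3/4" using esq2 nn by (simp add: field_simps)
  ultimately have bn: "(\<beta>^n)^2 \<ge> 3/4" by linarith
  have "\<bar>a1 - a2\<bar> * (\<beta>^n)^2 / 2 \<ge> (sqrt (real n) / 16) * (3/4) / 2"
    using d2 bn by (intro divide_right_mono mult_mono) auto
  with low have sum: "alloc_err c \<alpha> n \<pi> (inst1 n) True + alloc_err c \<alpha> n \<pi> (inst2 n) True
      \<ge> 3 * sqrt (real n) / 128" by simp
  have "max (max (alloc_err c \<alpha> n \<pi> (inst1 n) True) (alloc_err c \<alpha> n \<pi> (inst1 n) False))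
               (max (alloc_err c \<alpha> n \<pi> (inst2 n) True) (alloc_err c \<alpha> n \<pi> (inst2 n) False))
     \<ge> (alloc_err c \<alpha> n \<pi> (inst1 n) True + alloc_err c \<alpha> n \<pi> (inst2 n) True) / 2"
    by (simp add: max_def)
  with sum show "1/100 * sqrt (real n) \<le> max (max (alloc_err c \<alpha> n \<pi> (inst1 n) True) (alloc_err c \<alpha> n \<pi> (inst1 n) False))
               (max (alloc_err c \<alpha> n \<pi> (inst2 n) True) (alloc_err c \<alpha> n \<pi> (inst2 n) False))"
    using sn by linarith
qed


end
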